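(* Let $p$ be a prime, $m$ a positive integer, $q=p^m$, $n=q^2+1$. Let $\lambda\in\mathbb{F}_{q^2}^*$ have multiplicative order $r$, where $r\mid (q-1)$ and $\nu_2(r)=\nu_2(q-1)$. Let $\delta\in\mathbb{F}_{q^4}$ be a primitive $rn$-th root of unity with $\delta^n=\lambda$. For a positive integer $s$ with $s\mid(q^2-1)$, let $U_{s(q^2+1)}$ denote the set of all $s(q^2+1)$-th roots of unity in $\mathbb{F}_{q^4}^*$. Define $h(x)=x^{q-1}$ for $x\in U_{r(q^2+1)}$, and $h^{-1}(y_0)=\{x\in U_{r(q^2+1)}: h(x)=y_0\}$. Let $T=\{\delta^{-i}:0\le i\le q^2\}$ and $\lambda^jT=\{\lambda^j\delta^{-i}:0\le i\le q^2\}$ for $0\le j\le r-1$. Then $h$ maps $U_{r(q^2+1)}$ onto $U_{q^2+1}$. Moreover, for $y_0\in U_{q^2+1}$, if $h(x_0)=y_0$ for some $x_0\in U_{r(q^2+1)}$, then $h^{-1}(y_0)=\{\lambda^jx_0: 0\le j\le r-1\}$ and $|h^{-1}(y_0)\cap\lambda^jT|=1$ for every $0\le j\le r-1$.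
   Context: $\nu_2(\cdot)$ denotes the $2$-adic valuation of a positive integer. *)

theory Defs
  imports "HOL-Computational_Algebra.Computational_Algebra"
begin

definition mult_order :: "'a::field \<Rightarrow> nat" where
  "mult_order x = (if \<exists>k>0. x ^ k = 1 then (LEAST k. k > 0 \<and> x ^ k = 1) else 0)"

definition roots_of_unity :: "nat \<Rightarrow> 'a::field set" where
  "roots_of_unity k = {x. x \<noteq> 0 \<and> x ^ k = 1}"

definition nu2 :: "nat \<Rightarrow> nat" where
  "nu2 r = multiplicity (2::nat) r"

end

theory Submission
  imports Defs "HOL-Number_Theory.Cong"
begin

lemma roots_card_le:
  assumes "k > 0"
  shows "finite {x::'a::field. x ^ k = 1} \<and> card {x::'a::field. x ^ k = 1} \<le> k"
proof -
  define P :: "'a poly" where "P = monom 1 k - 1"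
  have ev: "poly P x = x ^ k - 1" for x by (simp add: P_def poly_monom)
  have nz: "P \<noteq> 0" proof
    assume "P = 0" then have "poly P 0 = 0" by simp
    moreover have "poly P 0 = -1" using ev[of 0] assms by simp
    ultimately show False by simp
  qed
  have deg: "degree P \<le> k" unfolding P_def
    by (rule degree_diff_le) (auto simp: degree_monom_le)
  have eq: "{x. x ^ k = 1} = {x. poly P x = 0}" by (auto simp: ev)
  show ?thesis unfolding eq using card_poly_roots_bound[OF nz] deg poly_roots_finite[OF nz] by auto
qed

lemma roots_eq:
  assumes "k > 0" "inj_on g {..<k}" "\<And>i. i < k \<Longrightarrow> (g i :: 'a::field) ^ k = 1"
  shows "{x::'a. x ^ k = 1} = g ` {..<k}"
proof -
  have c: "card (g ` {..<k}) = k" using card_image[OF assms(2)] by simp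
  have s: "g ` {..<k} \<subseteq> {x. x ^ k = 1}" using assms(3) by auto
  from roots_card_le[OF assms(1), where 'a='a] have "finite {x::'a. x ^ k = 1}" "card {x::'a. x ^ k = 1} \<le> k" by auto
  moreover have "card (g ` {..<k}) = card {x::'a. x ^ k = 1}"
    using card_mono[OF calculation(1) s] c calculation(2) by linarith
  ultimately show ?thesis using card_subset_eq[OF _ s] by blast
qed

lemma ord_pow:
  assumes "mult_order (z::'a::field) = d" "d > 0"
  shows "z ^ d = 1"
proof -
  have ex: "\<exists>k>0. z ^ k = 1" using assms unfolding mult_order_def by (auto split: if_splits)
  then have "d = (LEAST k. k > 0 \<and> z ^ k = 1)" using assms unfolding mult_order_def by auto
  then show ?thesis using LeastI_ex[of "\<lambda>k. k > 0 \<and> z ^ k = 1"] ex by auto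
qed

lemma ord_dvd:
  assumes "mult_order (z::'a::field) = d" "d > 0" "z ^ k = 1"
  shows "d dvd k"
proof -
  have ex: "\<exists>k>0. z ^ k = 1" using assms unfolding mult_order_def by (auto split: if_splits)
  then have dl: "d = (LEAST k. k > 0 \<and> z ^ k = 1)" using assms unfolding mult_order_def by auto
  have zd: "z ^ d = 1" by (rule ord_pow[OF assms(1,2)])
  have "z ^ k = z ^ (d * (k div d) + k mod d)" by simp
  also have "\<dots> = (z ^ d) ^ (k div d) * z ^ (k mod d)" by (simp only: power_add power_mult)
  finally have "z ^ k = (z ^ d) ^ (k div d) * z ^ (k mod d)" .
  then have "z ^ (k mod d) = 1" using zd assms(3) by simp
  moreover have "k mod d < d" using assms(2) by simp
  ultimately have "\<not> (k mod d > 0)" using dl not_less_Least by blast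
  then show ?thesis by auto
qed

lemma ord_eq:
  assumes "mult_order (z::'a::field) = d" "d > 0"
  shows "z ^ i = z ^ j \<longleftrightarrow> i mod d = j mod d"
proof -
  have zd: "z ^ d = 1" by (rule ord_pow[OF assms])
  have zn: "z \<noteq> 0" using zd assms(2) by (metis power_0_left less_not_refl2 zero_neq_one)
  have red: "z ^ i = z ^ (i mod d)" for i
  proof -
    have "z ^ i = z ^ (d * (i div d) + i mod d)" by simp
    also have "\<dots> = (z ^ d) ^ (i div d) * z ^ (i mod d)" by (simp only: power_add power_mult)
    finally show ?thesis using zd by simp
  qed
  have key: "z ^ a = z ^ b \<Longrightarrow> a < d \<Longrightarrow> b < d \<Longrightarrow> a \<le> b \<Longrightarrow> a = b" for a b
  proof -
    assume h: "z ^ a = z ^ b" "a < d" "b < d" "a \<le> b"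
    have "z ^ b = z ^ a * z ^ (b - a)" using h(4) by (metis le_add_diff_inverse power_add)
    then have "z ^ (b - a) = 1" using h(1) zn by simp
    then have "d dvd (b - a)" using ord_dvd[OF assms] by blast
    moreover have "b - a < d" using h by linarith
    ultimately have "b - a = 0" by (cases "b - a = 0") (auto dest: nat_dvd_not_less)
    then show "a = b" using h(4) by simp
  qed
  show ?thesis
  proof
    assume "z ^ i = z ^ j"
    then have "z ^ (i mod d) = z ^ (j mod d)" using red by metis
    moreover have "i mod d < d" "j mod d < d" using assms(2) by auto
    ultimately show "i mod d = j mod d" using key[of "i mod d" "j mod d"] key[of "j mod d" "i mod d"]
      by (cases "i mod d \<le> j mod d") auto
  next
    assume "i mod d = j mod d" then show "z ^ i = z ^ j" using red[of i] red[of j] by simp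
  qed
qed

lemma ord_pos:
  assumes "(x::'a::field) ^ k = 1" "k > 0"
  shows "mult_order x > 0"
proof -
  have ex: "\<exists>k>0. x ^ k = 1" using assms by auto
  then have "mult_order x = (LEAST k. k > 0 \<and> x ^ k = 1)" unfolding mult_order_def by auto
  then show ?thesis using LeastI_ex[of "\<lambda>k. k > 0 \<and> x ^ k = 1"] ex by auto
qed

lemma pow_gcd:
  assumes "(x::'a::field) ^ a = 1" "x ^ b = 1" "b > 0"
  shows "x ^ gcd a b = 1"
proof -
  define d where "d = mult_order x"
  have d0: "d > 0" using ord_pos[OF assms(2,3)] d_def by simp
  have "d dvd a" "d dvd b" using ord_dvd[OF d_def[symmetric] d0] assms by auto
  then have "d dvd gcd a b" by simp
  then obtain e where "gcd a b = d * e" by blast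
  then show ?thesis using ord_pow[OF d_def[symmetric] d0] by (simp add: power_mult)
qed

lemma ru_eq: "k > 0 \<Longrightarrow> roots_of_unity k = {x::'a::field. x ^ k = 1}"
  unfolding roots_of_unity_def by (auto simp: power_0_left)

theorem lemma3p3:
  fixes p m q n r :: nat and lam \<delta> :: "'a::{field,finite}"
  assumes "prime p" and "m > 0" and "q = p ^ m" and "n = q\<^sup>2 + 1"
    and "card (UNIV :: 'a set) = q ^ 4"
    and "lam ^ (q\<^sup>2) = lam" and "lam \<noteq> 0"
    and "mult_order lam = r" and "r dvd (q - 1)" and "nu2 r = nu2 (q - 1)"
    and "mult_order \<delta> = r * n" and "\<delta> ^ n = lam"
  shows "(\<lambda>x::'a. x ^ (q - 1)) ` roots_of_unity (r * n) = (roots_of_unity n :: 'a set)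
    \<and> (\<forall>y0 \<in> roots_of_unity n. \<forall>x0 \<in> roots_of_unity (r * n). x0 ^ (q - 1) = y0 \<longrightarrow>
          {x \<in> roots_of_unity (r * n). x ^ (q - 1) = y0} = {lam ^ j * x0 | j. j < r}
          \<and> (\<forall>j < r. card ({x \<in> roots_of_unity (r * n). x ^ (q - 1) = y0}
                 \<inter> {lam ^ j * inverse \<delta> ^ i | i. i \<le> q\<^sup>2}) = 1))"
proof -
  have p2: "p \<ge> 2" using assms(1) prime_ge_2_nat by blast
  have "p ^ 1 \<le> p ^ m" using assms(2) p2 by (intro power_increasing) auto
  then have q2: "q \<ge> 2" using p2 assms(3) by simp
  have r0: "r > 0" using assms(9) q2 by (cases "r = 0") auto
  have n0: "n > 0" using assms(4) by simp
  define N where "N = r * n"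
  have N0: "N > 0" using r0 n0 N_def by simp
  obtain t where qt: "q - 1 = r * t" using assms(9) by blast
  have t0: "t > 0" using qt q2 by (cases "t = 0") auto
  have "multiplicity (2::nat) (r * t) = multiplicity 2 r + multiplicity 2 t"
    by (rule prime_elem_multiplicity_mult_distrib) (use r0 t0 in auto)
  then have "multiplicity (2::nat) t = 0" using assms(10) qt unfolding nu2_def by simp
  then have todd: "odd t" using prime_elem_multiplicity_eq_zero_iff[of "2::nat" t] t0 by simp
  have nexp: "n = t * (r * r * t + 2 * r) + 2"
  proof -
    have "q = r * t + 1" using qt q2 by simp
    then show ?thesis using assms(4) by (simp add: power2_eq_square algebra_simps)
  qed
  have cop: "coprime t n"
  proof -
    have "gcd t n = gcd t 2" unfolding nexp by (metis gcd_add_mult mult.commute)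
    also have "\<dots> = 1" using todd coprime_right_2_iff_odd[of t] by (metis coprime_iff_gcd_eq_1)
    finally show ?thesis by (simp add: coprime_iff_gcd_eq_1)
  qed
  have dord: "mult_order \<delta> = N" using assms(11) N_def by simp
  have dN: "\<delta> ^ N = 1" by (rule ord_pow[OF dord N0])
  have dnz: "\<delta> \<noteq> 0" using dN N0 by (metis power_0_left less_not_refl2 zero_neq_one)
  have deq: "\<delta> ^ i = \<delta> ^ j \<longleftrightarrow> i mod N = j mod N" for i j by (rule ord_eq[OF dord N0])
  have lamd: "lam ^ k = \<delta> ^ (n * k)" for k using assms(12) by (simp add: power_mult)
  have UN: "roots_of_unity N = (\<lambda>i. \<delta> ^ i) ` {..<N}"
    unfolding ru_eq[OF N0]
  proof (rule roots_eq[OF N0])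
    show "inj_on (\<lambda>i. \<delta> ^ i) {..<N}" unfolding inj_on_def deq by simp
    show "(\<delta> ^ i) ^ N = 1" for i using dN by (metis power_mult mult.commute power_one)
  qed
  have Un: "roots_of_unity n = (\<lambda>i. \<delta> ^ (r * i)) ` {..<n}"
    unfolding ru_eq[OF n0]
  proof (rule roots_eq[OF n0])
    show "inj_on (\<lambda>i. \<delta> ^ (r * i)) {..<n}" unfolding inj_on_def deq N_def
      using r0 by (simp add: mod_mult_mult1)
    show "(\<delta> ^ (r * i)) ^ n = 1" for i
    proof -
      have "(\<delta> ^ (r * i)) ^ n = (\<delta> ^ N) ^ i" unfolding N_def by (simp add: power_mult[symmetric] algebra_simps)
      then show ?thesis using dN by simp
    qed
  qed
  have Ur: "roots_of_unity r = (\<lambda>j. lam ^ j) ` {..<r}"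
    unfolding ru_eq[OF r0]
  proof (rule roots_eq[OF r0])
    show "inj_on (\<lambda>j. lam ^ j) {..<r}" unfolding inj_on_def ord_eq[OF assms(8) r0] by simp
    show "(lam ^ i) ^ r = 1" for i using ord_pow[OF assms(8) r0] by (metis power_mult mult.commute power_one)
  qed
  have lamr: "lam ^ r = 1" by (rule ord_pow[OF assms(8) r0])
  have part1: "(\<lambda>x::'a. x ^ (q - 1)) ` roots_of_unity N = roots_of_unity n"
  proof
    show "(\<lambda>x::'a. x ^ (q - 1)) ` roots_of_unity N \<subseteq> roots_of_unity n"
    proof
      fix y :: 'a assume "y \<in> (\<lambda>x::'a. x ^ (q - 1)) ` roots_of_unity N"
      then obtain x where x: "x \<in> roots_of_unity N" "y = x ^ (q - 1)" by blast
      have xN: "x ^ N = 1" using x(1) unfolding roots_of_unity_def by simp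
      have "y ^ n = (x ^ N) ^ t" unfolding x(2) qt N_def by (simp add: power_mult[symmetric] algebra_simps)
      then show "y \<in> roots_of_unity n" unfolding ru_eq[OF n0] using xN by simp
    qed
    show "roots_of_unity n \<subseteq> (\<lambda>x::'a. x ^ (q - 1)) ` roots_of_unity N"
    proof
      fix y :: 'a assume "y \<in> roots_of_unity n"
      then obtain k where y: "y = \<delta> ^ (r * k)" using Un by auto
      obtain u where u: "[t * u = Suc 0] (mod n)" using cong_solve_coprime_nat[OF cop] by blast
      have "[t * u * k = Suc 0 * k] (mod n)" using u by (rule cong_scalar_right)
      then have c: "(t * u * k) mod n = k mod n" unfolding cong_def by simp
      have "(\<delta> ^ (u * k)) ^ (q - 1) = \<delta> ^ (r * (t * u * k))" unfolding qt
        by (simp add: power_mult[symmetric] algebra_simps)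
      also have "\<dots> = y" unfolding y deq N_def using c by (simp add: mod_mult_mult1)
      finally have "(\<delta> ^ (u * k)) ^ (q - 1) = y" .
      moreover have "\<delta> ^ (u * k) \<in> roots_of_unity N" unfolding UN
        by (rule image_eqI[where x="(u * k) mod N"]) (use N0 deq in auto)
      ultimately show "y \<in> (\<lambda>x::'a. x ^ (q - 1)) ` roots_of_unity N" by blast
    qed
  qed
  have part2: "{x \<in> roots_of_unity N. x ^ (q - 1) = y0} = {lam ^ j * x0 | j. j < r}
          \<and> (\<forall>j < r. card ({x \<in> roots_of_unity N. x ^ (q - 1) = y0}
                 \<inter> {lam ^ j * inverse \<delta> ^ i | i. i \<le> q\<^sup>2}) = 1)"
    if x0: "x0 \<in> roots_of_unity N" and y0: "x0 ^ (q - 1) = y0" for x0 y0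
  proof -
    have x0N: "x0 ^ N = 1" and x0nz: "x0 \<noteq> 0" using x0 unfolding roots_of_unity_def by auto
    have y0nz: "y0 \<noteq> 0" using y0 x0nz by auto
    have Feq: "{x \<in> roots_of_unity N. x ^ (q - 1) = y0} = {lam ^ j * x0 | j. j < r}"
    proof
      show "{x \<in> roots_of_unity N. x ^ (q - 1) = y0} \<subseteq> {lam ^ j * x0 | j. j < r}"
      proof
        fix x :: 'a assume "x \<in> {x \<in> roots_of_unity N. x ^ (q - 1) = y0}"
        then have xN: "x ^ N = 1" and xq: "x ^ (q - 1) = y0" unfolding roots_of_unity_def by auto
        define w where "w = x / x0"
        have w1: "w ^ (q - 1) = 1" unfolding w_def power_divide using xq y0 x0nz y0nz by simp
        have w2: "w ^ N = 1" unfolding w_def power_divide using xN x0N by simp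
        have "gcd (q - 1) N = r * gcd t n" unfolding qt N_def by (simp add: gcd_mult_distrib_nat)
        then have "gcd (q - 1) N = r" using cop by (simp add: coprime_iff_gcd_eq_1)
        then have "w ^ r = 1" using pow_gcd[OF w1 w2 N0] by simp
        then have "w \<in> roots_of_unity r" unfolding ru_eq[OF r0] by simp
        then obtain j where j: "j < r" "w = lam ^ j" using Ur by auto
        have "x = lam ^ j * x0" using j(2) x0nz unfolding w_def by (simp add: field_simps)
        then show "x \<in> {lam ^ j * x0 | j. j < r}" using j(1) by blast
      qed
      show "{lam ^ j * x0 | j. j < r} \<subseteq> {x \<in> roots_of_unity N. x ^ (q - 1) = y0}"
      proof
        fix x :: 'a assume "x \<in> {lam ^ j * x0 | j. j < r}"
        then obtain j where x: "x = lam ^ j * x0" by blast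
        have e1: "x ^ N = lam ^ (j * N) * x0 ^ N" unfolding x by (simp only: power_mult_distrib power_mult)
        have "j * N = r * (j * n)" unfolding N_def by simp
        then have "lam ^ (j * N) = (lam ^ r) ^ (j * n)" by (simp only: power_mult)
        then have "x ^ N = (lam ^ r) ^ (j * n) * x0 ^ N" using e1 by simp
        then have xN1: "x ^ N = 1" using lamr x0N by simp
        have e2: "x ^ (q - 1) = lam ^ (j * (q - 1)) * x0 ^ (q - 1)" unfolding x by (simp only: power_mult_distrib power_mult)
        have "j * (q - 1) = r * (j * t)" unfolding qt by simp
        then have "lam ^ (j * (q - 1)) = (lam ^ r) ^ (j * t)" by (simp only: power_mult)
        then have "x ^ (q - 1) = (lam ^ r) ^ (j * t) * x0 ^ (q - 1)" using e2 by simp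
        then have "x ^ (q - 1) = y0" using lamr y0 by simp
        then show "x \<in> {x \<in> roots_of_unity N. x ^ (q - 1) = y0}"
          unfolding ru_eq[OF N0] using xN1 by simp
      qed
    qed
    have card1: "card ({lam ^ k * x0 | k. k < r} \<inter> {lam ^ j * inverse \<delta> ^ i | i. i \<le> q\<^sup>2}) = 1"
      if j: "j < r" for j
    proof -
      have key: "lam ^ k * x0 * \<delta> ^ i = lam ^ j \<longleftrightarrow> lam ^ k * x0 = lam ^ j * inverse \<delta> ^ i" for k i
      proof -
        have dinz: "\<delta> ^ i \<noteq> 0" using dnz by simp
        have "lam ^ j * inverse \<delta> ^ i = lam ^ j / \<delta> ^ i" by (simp add: power_inverse divide_inverse)
        moreover have "(lam ^ k * x0 = lam ^ j / \<delta> ^ i) \<longleftrightarrow> lam ^ k * x0 * \<delta> ^ i = lam ^ j"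
          by (rule nonzero_eq_divide_eq[OF dinz])
        ultimately show ?thesis by simp
      qed
      obtain a where a: "a < N" "x0 = \<delta> ^ a" using x0 UN by auto
      define i0 where "i0 = (n - a mod n) mod n"
      have i0n: "i0 < n" unfolding i0_def using n0 by simp
      have "\<exists>c. a + i0 = n * c"
      proof (cases "a mod n = 0")
        case True
        then have "a = n * (a div n)" by (metis div_mult_mod_eq add.right_neutral mult.commute)
        then show ?thesis unfolding i0_def using True by (intro exI[of _ "a div n"]) simp
      next
        case False
        then have i0e: "i0 = n - a mod n" unfolding i0_def using n0 by simp
        have lt: "a mod n < n" using n0 by simp
        have dm: "n * (a div n) + a mod n = a" by (rule mult_div_mod_eq)
        have "a + i0 = n * (a div n) + n" using i0e lt dm by linarith
        then have "a + i0 = n * (a div n + 1)" by (simp add: add_mult_distrib2)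
        then show ?thesis by blast
      qed
      then obtain c where c: "a + i0 = n * c" by blast
      define k0 where "k0 = (j + r * c - c) mod r"
      have k0r: "k0 < r" unfolding k0_def using r0 by simp
      have rc: "r * c \<ge> c" using r0 by simp
      have "(k0 + c) mod r = (j + r * c - c + c) mod r" unfolding k0_def by (simp add: mod_add_left_eq)
      also have "\<dots> = j"
      proof -
        have "j + r * c - c + c = j + r * c" using rc by linarith
        then show ?thesis using j by simp
      qed
      finally have k0c: "(k0 + c) mod r = j" .
      have ex: "lam ^ k0 * x0 * \<delta> ^ i0 = lam ^ j"
      proof -
        have "\<delta> ^ (n * (k0 + c)) = \<delta> ^ (n * k0) * \<delta> ^ (n * c)"
          by (simp only: add_mult_distrib2 power_add)
        also have "\<dots> = \<delta> ^ (n * k0) * (\<delta> ^ a * \<delta> ^ i0)"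
          by (simp only: c[symmetric] power_add)
        finally have "lam ^ k0 * x0 * \<delta> ^ i0 = \<delta> ^ (n * (k0 + c))"
          unfolding lamd a(2) by (simp only: mult.assoc)
        also have "\<dots> = lam ^ j" unfolding lamd deq N_def using k0c j
          by (simp add: mult.commute[of r n] mod_mult_mult1)
        finally show ?thesis .
      qed
      have uniq: "i = i'" if
        h1: "lam ^ k * x0 * \<delta> ^ i = lam ^ j" and h2: "lam ^ k' * x0 * \<delta> ^ i' = lam ^ j"
        and ii: "i \<le> i'" "i' < n" for k k' i i'
      proof -
        define d where "d = i' - i"
        have "i' = i + d" unfolding d_def using ii by simp
        then have "\<delta> ^ i' = \<delta> ^ i * \<delta> ^ d" by (simp only: power_add)
        then have "lam ^ k * (x0 * \<delta> ^ i) = lam ^ k' * \<delta> ^ d * (x0 * \<delta> ^ i)"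
          using h1 h2 by (simp add: ac_simps)
        then have "lam ^ k = lam ^ k' * \<delta> ^ d" using x0nz dnz by simp
        then have "\<delta> ^ (n * k) = \<delta> ^ (n * k' + d)" unfolding lamd by (simp add: power_add)
        then have "(n * k) mod N = (n * k' + d) mod N" using deq by simp
        then have "(n * k) mod N mod n = (n * k' + d) mod N mod n" by simp
        then have "(n * k) mod n = (n * k' + d) mod n" unfolding N_def by (simp add: mod_mod_cancel)
        then have "d mod n = 0" by simp
        moreover have "d < n" using ii unfolding d_def by simp
        ultimately show ?thesis using ii unfolding d_def by simp
      qed
      have "{lam ^ k * x0 | k. k < r} \<inter> {lam ^ j * inverse \<delta> ^ i | i. i \<le> q\<^sup>2} = {lam ^ k0 * x0}"
      proof
        have "i0 \<le> q\<^sup>2" using i0n assms(4) by simp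
        then show "{lam ^ k0 * x0} \<subseteq> {lam ^ k * x0 | k. k < r} \<inter> {lam ^ j * inverse \<delta> ^ i | i. i \<le> q\<^sup>2}"
          using k0r ex key by blast
        show "{lam ^ k * x0 | k. k < r} \<inter> {lam ^ j * inverse \<delta> ^ i | i. i \<le> q\<^sup>2} \<subseteq> {lam ^ k0 * x0}"
        proof
          fix z :: 'a assume "z \<in> {lam ^ k * x0 | k. k < r} \<inter> {lam ^ j * inverse \<delta> ^ i | i. i \<le> q\<^sup>2}"
          then obtain k i where z: "z = lam ^ k * x0" "z = lam ^ j * inverse \<delta> ^ i" "i \<le> q\<^sup>2" by blast
          have hz: "lam ^ k * x0 * \<delta> ^ i = lam ^ j" using key z by simp
          have in': "i < n" using z(3) assms(4) by simp
          have "i = i0"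
          proof (cases "i \<le> i0")
            case True then show ?thesis using uniq[OF hz ex True i0n] by simp
          next
            case False then show ?thesis using uniq[OF ex hz _ in'] by simp
          qed
          then have "z = lam ^ k0 * x0" using z(2) ex key by metis
          then show "z \<in> {lam ^ k0 * x0}" by simp
        qed
      qed
      then show ?thesis by simp
    qed
    show ?thesis using Feq card1 by simp
  qed
  show ?thesis using part1 part2 unfolding N_def by blast
qed

end
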